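(* Let $n\ge2$, $d\ge1$, $k\ge1$, $R>0$, and let $V\in\mathcal{C}^{k+1}(\mathbb{R}^d,\mathbb{R})$ satisfy $V(u)=|u|^2/2$ for all $u$ with $|u|\ge R$. Then: (1) every solution of $\ddot u(r)=-\frac{n-1}{r}\dot u(r)+\nabla V(u(r))$ (with initial data $(u,\dot u)$ prescribed at some $r_1>0$) is defined on the whole interval $(0,+\infty)$; (2) for every $u\in\mathcal{S}_V$, $\sup_{r\in(0,+\infty)}|u(r)|<R$.
   Context: $\mathcal{S}_V$ is the set of functions $u:[0,+\infty)\to\mathbb{R}^d$ satisfying $\ddot u(r)=-\frac{n-1}{r}\dot u(r)+\nabla V(u(r))$ on $(0,+\infty)$, $\dot u(r)\to0$ as $r\to0^+$, and $u(r)\to u_\infty$ as $r\to+\infty$ for some $u_\infty$ with $\nabla V(u_\infty)=0$ and $D^2V(u_\infty)$ positive definite. *)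

theory Defs
  imports "HOL-Analysis.Analysis"
begin

text \<open>Functions of class C^m on the whole space: C^0 = continuous;
  C^(m+1) = (Frechet) differentiable everywhere with every directional derivative
  (equivalently, every partial derivative, i.e. the derivative) of class C^m.\<close>
fun Ck :: "nat \<Rightarrow> ('a::euclidean_space \<Rightarrow> real) \<Rightarrow> bool" where
  "Ck 0 f = continuous_on UNIV f"
| "Ck (Suc m) f = ((\<forall>x. f differentiable (at x)) \<and>
      (\<forall>v. Ck m (\<lambda>x. frechet_derivative f (at x) v)))"

definition grad :: "('a::euclidean_space \<Rightarrow> real) \<Rightarrow> 'a \<Rightarrow> 'a" where
  "grad V u = (\<Sum>b\<in>Basis. frechet_derivative V (at u) b *\<^sub>R b)"

definition hess :: "('a::euclidean_space \<Rightarrow> real) \<Rightarrow> 'a \<Rightarrow> 'a \<Rightarrow> 'a \<Rightarrow> real" where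
  "hess V u h k = frechet_derivative (\<lambda>x. frechet_derivative V (at x) h) (at u) k"

definition pos_def_hess :: "('a::euclidean_space \<Rightarrow> real) \<Rightarrow> 'a \<Rightarrow> bool" where
  "pos_def_hess V u = (\<forall>h. h \<noteq> 0 \<longrightarrow> hess V u h h > 0)"

definition solves_on :: "nat \<Rightarrow> ('a::euclidean_space \<Rightarrow> real) \<Rightarrow> (real \<Rightarrow> 'a) \<Rightarrow> real set \<Rightarrow> bool" where
  "solves_on n V u J = (\<exists>u'. \<forall>r\<in>J.
      (u has_vector_derivative u' r) (at r) \<and>
      (u' has_vector_derivative (- ((real n - 1) / r) *\<^sub>R u' r + grad V (u r))) (at r))"

definition S_V :: "nat \<Rightarrow> ('a::euclidean_space \<Rightarrow> real) \<Rightarrow> (real \<Rightarrow> 'a) set" where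
  "S_V n V = {u. solves_on n V u {0<..} \<and>
      ((\<lambda>r. vector_derivative u (at r)) \<longlongrightarrow> 0) (at_right 0) \<and>
      (\<exists>uinf. (u \<longlongrightarrow> uinf) at_top \<and> grad V uinf = 0 \<and> pos_def_hess V uinf)}"

end

theory Submission
  imports Defs
begin


lemma ode_exists:
  fixes f :: "real \<Rightarrow> 'y::euclidean_space \<Rightarrow> 'y"
  assumes td: "t0 \<le> d" and cont: "continuous_on ({t0..d} \<times> UNIV) (\<lambda>p. f (fst p) (snd p))"
    and K: "K > 0" and lip: "\<And>t y z. t \<in> {t0..d} \<Longrightarrow> norm (f t y - f t z) \<le> K * norm (y - z)"
  shows "\<exists>y. y t0 = y0 \<and> (\<forall>t\<in>{t0..d}. (y has_vector_derivative f t (y t)) (at t within {t0..d}))"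
proof -
  define E where "E s = exp (2*K*(s - t0))" for s
  have Epos: "E s > 0" for s by (simp add: E_def)
  define \<Phi> where "\<Phi> g x = (1 / E x) *\<^sub>R (y0 + integral {t0..x} (\<lambda>s. f s (E s *\<^sub>R g s)))"
    for g :: "real \<Rightarrow> 'y" and x
  have contE: "continuous_on S E" for S unfolding E_def by (intro continuous_intros)
  have contI: "continuous_on {t0..d} (\<lambda>s. f s (E s *\<^sub>R g s))" if "continuous_on {t0..d} g" for g
  proof -
    have "continuous_on {t0..d} (\<lambda>s. (s, E s *\<^sub>R g s))"
      by (intro continuous_intros that contE)
    from continuous_on_compose2[OF cont this] show ?thesis by auto
  qed
  have intI: "(\<lambda>s. f s (E s *\<^sub>R g s)) integrable_on {t0..x}" if "continuous_on {t0..d} g" "x \<le> d" for g x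
    by (rule integrable_continuous_interval, rule continuous_on_subset[OF contI[OF that(1)]]) (use that in auto)
  have contPhi: "continuous_on {t0..d} (\<Phi> g)" if "continuous_on {t0..d} g" for g
    unfolding \<Phi>_def
    by (intro continuous_intros contE indefinite_integral_continuous_1 integrable_continuous_interval contI that)
       (use Epos in \<open>auto simp: less_imp_neq[symmetric]\<close>)
  have "\<exists>h::real \<Rightarrow>\<^sub>C 'y. \<forall>x. apply_bcontfun h x = \<Phi> g (clamp t0 d x)" for g :: "real \<Rightarrow>\<^sub>C 'y"
  proof -
    have "continuous_on (cbox t0 d) (\<Phi> g)" using contPhi[of g] by auto
    from continuous_on_cbox_bcontfunE[OF this] obtain h :: "real \<Rightarrow>\<^sub>C 'y"
      where "\<And>x. h x = \<Phi> g (clamp t0 d x)" by metis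
    then show ?thesis by blast
  qed
  then obtain T :: "(real \<Rightarrow>\<^sub>C 'y) \<Rightarrow> (real \<Rightarrow>\<^sub>C 'y)" where T: "\<And>g x. apply_bcontfun (T g) x = \<Phi> (apply_bcontfun g) (clamp t0 d x)" by metis
  have clampin: "clamp t0 d x \<in> {t0..d}" for x using clamp_in_interval[of t0 d x] td by auto
  have Eint: "integral {t0..x} E = (E x - 1) / (2*K)" if "t0 \<le> x" for x
  proof -
    have "(E has_integral ((E x)/(2*K) - (E t0)/(2*K))) {t0..x}"
    proof (rule fundamental_theorem_of_calculus[OF that])
      fix s assume "s \<in> {t0..x}"
      show "((\<lambda>s. E s / (2*K)) has_vector_derivative E s) (at s within {t0..x})"
        unfolding E_def using K
        by (auto intro!: derivative_eq_intros simp: has_real_derivative_iff_has_vector_derivative[symmetric])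
    qed
    then show ?thesis by (simp add: integral_unique E_def diff_divide_distrib)
  qed
  have contr: "dist (T g) (T h) \<le> (1/2) * dist g h" for g h
  proof (rule dist_bound)
    fix x
    define \<tau> where "\<tau> = clamp t0 d x"
    have \<tau>: "\<tau> \<in> {t0..d}" using clampin \<tau>_def by auto
    let ?D = "dist g h"
    have ig: "(\<lambda>s. f s (E s *\<^sub>R g s)) integrable_on {t0..\<tau>}" and ih: "(\<lambda>s. f s (E s *\<^sub>R h s)) integrable_on {t0..\<tau>}"
      using intI \<tau> by auto
    have iE: "(\<lambda>s. K * ?D * E s) integrable_on {t0..\<tau>}"
      by (intro integrable_continuous_interval continuous_intros contE)
    have "norm (integral {t0..\<tau>} (\<lambda>s. f s (E s *\<^sub>R g s)) - integral {t0..\<tau>} (\<lambda>s. f s (E s *\<^sub>R h s)))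
        = norm (integral {t0..\<tau>} (\<lambda>s. f s (E s *\<^sub>R g s) - f s (E s *\<^sub>R h s)))"
      using integral_diff[OF ig ih] by simp
    also have "\<dots> \<le> integral {t0..\<tau>} (\<lambda>s. K * ?D * E s)"
    proof (rule integral_norm_bound_integral[OF integrable_diff[OF ig ih] iE])
      fix s assume s: "s \<in> {t0..\<tau>}"
      have "norm (f s (E s *\<^sub>R g s) - f s (E s *\<^sub>R h s)) \<le> K * norm (E s *\<^sub>R g s - E s *\<^sub>R h s)"
        using lip s \<tau> by auto
      also have "\<dots> = K * E s * dist (g s) (h s)"
        using Epos[of s] by (simp add: dist_norm scaleR_diff_right[symmetric])
      also have "\<dots> \<le> K * E s * ?D"
        using dist_bounded[of g s h] K Epos[of s] by (intro mult_left_mono) auto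
      finally show "norm (f s (E s *\<^sub>R g s) - f s (E s *\<^sub>R h s)) \<le> K * ?D * E s" by (simp add: ac_simps)
    qed
    also have "\<dots> = K * ?D * ((E \<tau> - 1) / (2*K))"
      using Eint[of \<tau>] \<tau> by simp
    finally have bnd: "norm (integral {t0..\<tau>} (\<lambda>s. f s (E s *\<^sub>R g s)) - integral {t0..\<tau>} (\<lambda>s. f s (E s *\<^sub>R h s)))
        \<le> ?D * (E \<tau> - 1) / 2" using K by simp
    have "dist (T g x) (T h x) = norm (\<Phi> g \<tau> - \<Phi> h \<tau>)" by (simp add: T \<tau>_def dist_norm)
    also have "\<Phi> g \<tau> - \<Phi> h \<tau> = (1 / E \<tau>) *\<^sub>R (integral {t0..\<tau>} (\<lambda>s. f s (E s *\<^sub>R g s)) - integral {t0..\<tau>} (\<lambda>s. f s (E s *\<^sub>R h s)))"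
      unfolding \<Phi>_def by (simp add: algebra_simps)
    also have "norm \<dots> \<le> (1 / E \<tau>) * (?D * (E \<tau> - 1) / 2)"
      using bnd Epos[of \<tau>] by (simp add: mult_left_mono divide_le_eq)
    also have "\<dots> \<le> (1/2) * ?D"
      using Epos[of \<tau>] zero_le_dist[of g h] by (simp add: field_simps)
    finally show "dist (T g x) (T h x) \<le> (1/2) * ?D" .
  qed
  from banach_fix_type[of "1/2" T] contr obtain z where z: "T z = z" by auto
  define y where "y t = y0 + integral {t0..t} (\<lambda>s. f s (E s *\<^sub>R z s))" for t
  have zeq: "E t *\<^sub>R z t = y t" if "t \<in> {t0..d}" for t
  proof -
    have "z t = \<Phi> z t" using T[of z t] z that by (simp add: clamp_cancel_cbox)
    then show ?thesis unfolding \<Phi>_def y_def using Epos[of t] by simp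
  qed
  show ?thesis
  proof (intro exI conjI ballI)
    show "y t0 = y0" by (simp add: y_def)
    fix t assume t: "t \<in> {t0..d}"
    have "(y has_vector_derivative f t (E t *\<^sub>R z t)) (at t within {t0..d})"
      unfolding y_def
      using integral_has_vector_derivative[OF contI[of z] t]
      by (intro derivative_eq_intros) auto
    then show "(y has_vector_derivative f t (y t)) (at t within {t0..d})" using zeq[OF t] by simp
  qed
qed




lemma inner_self_deriv:
  fixes w :: "real \<Rightarrow> 'y::real_inner"
  assumes "(w has_vector_derivative w') (at t)"
  shows "((\<lambda>t. inner (w t) (w t)) has_real_derivative 2 * inner (w t) w') (at t)"
proof -
  have "((\<lambda>t. inner (w t) (w t)) has_derivative (\<lambda>h. inner (w t) (h *\<^sub>R w') + inner (h *\<^sub>R w') (w t))) (at t)"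
    using assms unfolding has_vector_derivative_def by (intro derivative_eq_intros) auto
  then show ?thesis unfolding has_field_derivative_def
    by (rule has_derivative_eq_rhs) (auto simp: fun_eq_iff inner_commute algebra_simps)
qed

lemma ode_unique:
  fixes f :: "real \<Rightarrow> 'y::real_inner \<Rightarrow> 'y"
  assumes K: "K \<ge> 0" and lip: "\<And>t y z. t \<in> {t0..d} \<Longrightarrow> norm (f t y - f t z) \<le> K * norm (y - z)"
    and y: "\<And>t. t\<in>{t0..d} \<Longrightarrow> (y has_vector_derivative f t (y t)) (at t within {t0..d})"
    and z: "\<And>t. t\<in>{t0..d} \<Longrightarrow> (z has_vector_derivative f t (z t)) (at t within {t0..d})"
    and eq0: "y t0 = z t0" and t: "t \<in> {t0..d}"
  shows "y t = z t"
proof -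
  define \<phi> where "\<phi> = (\<lambda>s. exp (- (2*K * s)) * inner (y s - z s) (y s - z s))"
  have cy: "continuous_on {t0..d} y" using y
    by (rule continuous_on_vector_derivative) auto
  have cz: "continuous_on {t0..d} z" using z
    by (rule continuous_on_vector_derivative) auto
  have "\<phi> t0 \<ge> \<phi> t"
  proof (rule DERIV_nonpos_imp_decreasing_open[of t0 t \<phi>])
    show "t0 \<le> t" using t by auto
    show "continuous_on {t0..t} \<phi>" unfolding \<phi>_def
      by (intro continuous_intros continuous_on_subset[OF cy] continuous_on_subset[OF cz]) (use t in auto)
    fix s assume s: "t0 < s" "s < t"
    then have sI: "s \<in> {t0..d}" using t by auto
    have atw: "at s within {t0..d} = at s" using s t by (intro at_within_interior) auto
    have yd: "(y has_vector_derivative f s (y s)) (at s)" using y[OF sI] atw by simp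
    have zd: "(z has_vector_derivative f s (z s)) (at s)" using z[OF sI] atw by simp
    have wd: "((\<lambda>s. y s - z s) has_vector_derivative f s (y s) - f s (z s)) (at s)"
      by (intro derivative_intros yd zd)
    let ?w = "y s - z s"
    have "(\<phi> has_real_derivative exp (- (2*K * s)) * (- (2*K)) * inner ?w ?w + exp (- (2*K * s)) * (2 * inner ?w (f s (y s) - f s (z s)))) (at s)"
      unfolding \<phi>_def
      using inner_self_deriv[OF wd] by (intro derivative_eq_intros) auto
    moreover have "exp (- (2*K * s)) * (- (2*K)) * inner ?w ?w + exp (- (2*K * s)) * (2 * inner ?w (f s (y s) - f s (z s))) \<le> 0"
    proof -
      have "inner ?w (f s (y s) - f s (z s)) \<le> norm ?w * norm (f s (y s) - f s (z s))"
        by (rule norm_cauchy_schwarz)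
      also have "\<dots> \<le> norm ?w * (K * norm ?w)" using lip[OF sI] by (intro mult_left_mono) auto
      finally have "inner ?w (f s (y s) - f s (z s)) \<le> K * inner ?w ?w"
        by (simp add: power2_norm_eq_inner[symmetric] power2_eq_square ac_simps)
      then have "- (2*K) * inner ?w ?w + 2 * inner ?w (f s (y s) - f s (z s)) \<le> 0" by linarith
      then have "exp (- (2*K * s)) * (- (2*K) * inner ?w ?w + 2 * inner ?w (f s (y s) - f s (z s))) \<le> 0"
        by (simp add: mult_nonneg_nonpos)
      then show ?thesis by (simp add: algebra_simps)
    qed
    ultimately show "\<exists>D. (\<phi> has_real_derivative D) (at s) \<and> D \<le> 0" by blast
  qed
  moreover have "\<phi> t0 = 0" using eq0 by (simp add: \<phi>_def)
  moreover have "\<phi> t \<ge> 0" unfolding \<phi>_def by simp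
  ultimately have "\<phi> t = 0" by simp
  then show ?thesis by (simp add: \<phi>_def)
qed




lemma hvd_fst:
  assumes "(Y has_vector_derivative D) F"
  shows "((\<lambda>r. fst (Y r)) has_vector_derivative fst D) F"
  using has_derivative_fst[OF assms[unfolded has_vector_derivative_def]]
  unfolding has_vector_derivative_def by simp

lemma hvd_snd:
  assumes "(Y has_vector_derivative D) F"
  shows "((\<lambda>r. snd (Y r)) has_vector_derivative snd D) F"
  using has_derivative_snd[OF assms[unfolded has_vector_derivative_def]]
  unfolding has_vector_derivative_def by simp

lemma hvd_reflect:
  assumes "(z has_vector_derivative D) (at (- t))"
  shows "((\<lambda>s. z (- s)) has_vector_derivative - D) (at t)"
proof -
  have m: "(uminus has_vector_derivative (-1::real)) (at t)"
    by (auto intro!: derivative_eq_intros simp: has_real_derivative_iff_has_vector_derivative[symmetric])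
  from vector_diff_chain_at[OF m, of z D] assms show ?thesis by (simp add: o_def)
qed

lemma part1:
  fixes G :: "'a::euclidean_space \<Rightarrow> 'a" and n :: nat
  assumes L: "\<And>x y. norm (G x - G y) \<le> L * norm (x - y)" and L0: "L \<ge> 0" and n1: "n \<ge> 1"
    and J: "is_interval J" "open J" "J \<noteq> {}" "J \<subseteq> {0<..}"
    and u: "\<And>r. r\<in>J \<Longrightarrow> (u has_vector_derivative u' r) (at r) \<and>
              (u' has_vector_derivative (- ((real n - 1) / r) *\<^sub>R u' r + G (u r))) (at r)"
  shows "\<exists>w w'. (\<forall>r\<in>{0<..}. (w has_vector_derivative w' r) (at r) \<and>
              (w' has_vector_derivative (- ((real n - 1) / r) *\<^sub>R w' r + G (w r))) (at r))
           \<and> (\<forall>r\<in>J. w r = u r)"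
proof -
  define F where "F t y = (snd y, - ((real n - 1) / t) *\<^sub>R snd y + G (fst y))" for t :: real and y :: "'a \<times> 'a"
  define Fb where "Fb s y = - F (-s) y" for s :: real and y :: "'a \<times> 'a"
  define K where "K c = 1 + (real n - 1) / c + L" for c :: real
  have n1': "real n - 1 \<ge> 0" using n1 by simp
  have Kpos: "K c > 0" if "c > 0" for c unfolding K_def using that n1' L0 by (simp add: add_pos_nonneg)
  have lipF: "norm (F t y - F t z) \<le> K c * norm (y - z)" if "c > 0" "c \<le> t" for c t y z
  proof -
    obtain a p where y: "y = (a, p)" by fastforce
    obtain b q where z: "z = (b, q)" by fastforce
    have "norm (F t y - F t z) \<le> norm (p - q) + norm (- ((real n - 1) / t) *\<^sub>R (p - q) + (G a - G b))"
    proof -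
      have "F t y - F t z = (p - q, - ((real n - 1) / t) *\<^sub>R (p - q) + (G a - G b))"
        by (simp add: F_def y z algebra_simps)
      then show ?thesis using norm_Pair_le by metis
    qed
    also have "\<dots> \<le> norm (p - q) + ((real n - 1) / c * norm (p - q) + L * norm (a - b))"
    proof -
      have "norm (- ((real n - 1) / t) *\<^sub>R (p - q)) = (real n - 1) / t * norm (p - q)"
        using that n1' by simp
      also have "\<dots> \<le> (real n - 1) / c * norm (p - q)"
        using that n1' by (intro mult_right_mono divide_left_mono) auto
      finally show ?thesis using L[of a b] norm_triangle_ineq[of "- ((real n - 1) / t) *\<^sub>R (p - q)" "G a - G b"] by linarith
    qed
    also have "\<dots> \<le> K c * norm (y - z)"
    proof -
      have "norm (p - q) \<le> norm (y - z)" "norm (a - b) \<le> norm (y - z)"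
        using norm_snd_le[of "p - q" "a - b"] norm_fst_le[of "a - b" "p - q"] by (auto simp: y z)
      then have "(real n - 1)/c * norm (p-q) \<le> (real n - 1)/c * norm (y-z)"
          "L * norm (a-b) \<le> L * norm (y-z)"
        using n1' that L0 by (auto intro!: mult_left_mono simp del: times_divide_eq_left)
      moreover have "K c * norm (y - z) = norm (y-z) + (real n - 1)/c * norm (y-z) + L * norm (y-z)"
        unfolding K_def by (simp add: algebra_simps)
      ultimately show ?thesis using \<open>norm (p - q) \<le> norm (y - z)\<close> by linarith
    qed
    finally show ?thesis .
  qed
  have contG: "continuous_on UNIV G"
    by (rule lipschitz_on_continuous_on[of L]) (auto simp: lipschitz_on_def L0 dist_norm L)
  have contF: "continuous_on S (\<lambda>p. F (fst p) (snd p))" if "\<forall>p\<in>S. fst p \<noteq> 0" for S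
  proof -
    have cg: "continuous_on S (\<lambda>p. G (fst (snd p)))"
      by (rule continuous_on_compose2[OF contG]) (auto intro!: continuous_intros)
    have cd: "continuous_on S (\<lambda>p. (real n - 1) / fst p)"
      using that by (intro continuous_on_divide continuous_intros) auto
    show ?thesis unfolding F_def
      by (intro continuous_on_Pair continuous_on_add continuous_on_scaleR continuous_on_minus cg cd
          continuous_on_snd continuous_on_fst continuous_on_id)
  qed
  have contFb: "continuous_on S (\<lambda>p. Fb (fst p) (snd p))" if "\<forall>p\<in>S. fst p \<noteq> 0" for S
  proof -
    have "continuous_on S (\<lambda>p. F (fst (- fst p, snd p)) (snd (- fst p, snd p)))"
      by (rule continuous_on_compose2[OF contF[of "(\<lambda>p. (- fst p, snd p)) ` S"]])
         (use that in \<open>auto intro!: continuous_intros\<close>)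
    then have "continuous_on S (\<lambda>p. - F (fst (- fst p, snd p)) (snd (- fst p, snd p)))"
      by (intro continuous_intros)
    then show ?thesis by (simp add: Fb_def)
  qed

  obtain t1 t2 where t12: "t1 \<in> J" "t2 \<in> J" "t1 < t2"
  proof -
    from J(3) obtain t where t: "t \<in> J" by auto
    from J(2) t obtain e where e: "e > 0" "ball t e \<subseteq> J" by (meson openE)
    have "t + e/2 \<in> ball t e" using e by (simp add: dist_norm)
    then show ?thesis using that[of t "t + e/2"] t e by auto
  qed
  have t1pos: "t1 > 0" using t12 J(4) by auto
  have Jseg: "x \<in> J" if "a \<in> J" "b \<in> J" "a \<le> x" "x \<le> b" for a b x
    using J(1) that unfolding is_interval_1 by blast
  define U where "U t = (u t, u' t)" for t
  have Ud: "(U has_vector_derivative F t (U t)) (at t)" if "t \<in> J" for t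
    unfolding U_def F_def using u[OF that] by (auto intro!: has_vector_derivative_Pair)
  have K0: "K c \<ge> 0" if "c > 0" for c using Kpos[OF that] by simp
  have exF: "\<exists>y. y t1 = U t1 \<and> (\<forall>t\<in>{t1..d}. (y has_vector_derivative F t (y t)) (at t within {t1..d}))"
    if "t1 \<le> d" for d
    by (rule ode_exists[OF that contF Kpos[OF t1pos] lipF[OF t1pos]]) (use t1pos in auto)
  define Sf where "Sf d = (SOME y. y t1 = U t1 \<and> (\<forall>t\<in>{t1..d}. (y has_vector_derivative F t (y t)) (at t within {t1..d})))" for d
  have Sf: "Sf d t1 = U t1 \<and> (\<forall>t\<in>{t1..d}. (Sf d has_vector_derivative F t (Sf d t)) (at t within {t1..d}))"
    if "t1 \<le> d" for d
    unfolding Sf_def by (rule someI_ex[OF exF[OF that]])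
  have uniqF: "Sf d t = Sf d' t" if "t1 \<le> t" "t \<le> d" "t \<le> d'" for d d' t
  proof (rule ode_unique[OF K0[OF t1pos] lipF[OF t1pos], of t1 t])
    show "t \<in> {t1..t}" using that by auto
    show "Sf d t1 = Sf d' t1" using Sf[of d] Sf[of d'] that by auto
    fix s assume s: "s \<in> {t1..t}"
    show "(Sf d has_vector_derivative F s (Sf d s)) (at s within {t1..t})"
      using Sf[of d] that s by (auto intro: has_vector_derivative_within_subset[where S="{t1..d}"])
    show "(Sf d' has_vector_derivative F s (Sf d' s)) (at s within {t1..t})"
      using Sf[of d'] that s by (auto intro: has_vector_derivative_within_subset[where S="{t1..d'}"])
  qed auto
  have SfU: "Sf d t = U t" if "t1 \<le> t" "t \<le> d" "t \<in> J" for d t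
  proof (rule ode_unique[OF K0[OF t1pos] lipF[OF t1pos], of t1 t])
    show "t \<in> {t1..t}" using that by auto
    show "Sf d t1 = U t1" using Sf[of d] that by auto
    fix s assume s: "s \<in> {t1..t}"
    show "(Sf d has_vector_derivative F s (Sf d s)) (at s within {t1..t})"
      using Sf[of d] that s by (auto intro: has_vector_derivative_within_subset[where S="{t1..d}"])
    have "s \<in> J" using Jseg[OF t12(1) that(3)] s by auto
    then show "(U has_vector_derivative F s (U s)) (at s within {t1..t})"
      using Ud by (auto intro: has_vector_derivative_at_within)
  qed auto
  define yF where "yF t = Sf (t+1) t" for t
  have yFU: "yF t = U t" if "t1 \<le> t" "t \<in> J" for t
    unfolding yF_def using SfU that by auto
  have yFd: "(yF has_vector_derivative F t (yF t)) (at t)" if "t1 < t" for t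
  proof -
    have "(Sf (t+1) has_vector_derivative F t (Sf (t+1) t)) (at t within {t1..t+1})"
      using Sf[of "t+1"] that by auto
    moreover have "at t within {t1..t+1} = at t" using that by (intro at_within_Icc_at) auto
    ultimately have "(Sf (t+1) has_vector_derivative F t (yF t)) (at t)" by (simp add: yF_def)
    then show ?thesis
      by (rule has_vector_derivative_transform_within_open[of _ _ _ "{t1<..<t+1}"])
         (use that in \<open>auto simp: yF_def intro: uniqF\<close>)
  qed
  have exB: "\<exists>z. z (-t2) = U t2 \<and> (\<forall>s\<in>{-t2..-c}. (z has_vector_derivative Fb s (z s)) (at s within {-t2..-c}))"
    if "0 < c" "c \<le> t2" for c
  proof (rule ode_exists[OF _ contFb Kpos[OF that(1)]])
    show "- t2 \<le> - c" using that by auto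
    show "\<forall>p\<in>{- t2..- c} \<times> UNIV. fst p \<noteq> 0" using that by auto
    fix s y z assume "s \<in> {- t2..- c}"
    then show "norm (Fb s y - Fb s z) \<le> K c * norm (y - z)"
      using lipF[OF that(1), of "-s" y z] by (simp add: Fb_def norm_minus_commute)
  qed
  define Sb where "Sb c = (SOME z. z (-t2) = U t2 \<and> (\<forall>s\<in>{-t2..-c}. (z has_vector_derivative Fb s (z s)) (at s within {-t2..-c})))" for c
  have Sb: "Sb c (-t2) = U t2 \<and> (\<forall>s\<in>{-t2..-c}. (Sb c has_vector_derivative Fb s (Sb c s)) (at s within {-t2..-c}))"
    if "0 < c" "c \<le> t2" for c
    unfolding Sb_def by (rule someI_ex[OF exB[OF that]])
  have lipFb: "norm (Fb s' y - Fb s' z) \<le> K (-s) * norm (y - z)" if "s < 0" "s' \<in> {-t2..s}" for s s' y z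
    using lipF[of "-s" "-s'" y z] that by (simp add: Fb_def norm_minus_commute)
  have uniqB: "Sb c s = Sb c' s" if "0<c" "c \<le> t2" "0 < c'" "c' \<le> t2" "-t2 \<le> s" "s \<le> -c" "s \<le> -c'" for c c' s
  proof -
    have L1: "K (-s) \<ge> 0" using K0[of "-s"] that by auto
    have L2: "\<And>s' y z. s' \<in> {-t2..s} \<Longrightarrow> norm (Fb s' y - Fb s' z) \<le> K (-s) * norm (y - z)"
      using lipFb that by auto
    have D1: "\<And>s'. s' \<in> {-t2..s} \<Longrightarrow> (Sb c has_vector_derivative Fb s' (Sb c s')) (at s' within {-t2..s})"
      using Sb[of c] that by (auto intro: has_vector_derivative_within_subset[where S="{-t2..-c}"])
    have D2: "\<And>s'. s' \<in> {-t2..s} \<Longrightarrow> (Sb c' has_vector_derivative Fb s' (Sb c' s')) (at s' within {-t2..s})"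
      using Sb[of c'] that by (auto intro: has_vector_derivative_within_subset[where S="{-t2..-c'}"])
    show ?thesis
      using ode_unique[OF L1 L2 D1 D2, of s] Sb[of c] Sb[of c'] that by auto
  qed
  have SbU: "Sb c s = U (-s)" if h: "0<c" "c \<le> t2" "-t2 \<le> s" "s \<le> -c" "-s \<in> J" for c s
  proof -
    have L1: "K (-s) \<ge> 0" using K0[of "-s"] that by auto
    have L2: "\<And>s' y z. s' \<in> {-t2..s} \<Longrightarrow> norm (Fb s' y - Fb s' z) \<le> K (-s) * norm (y - z)"
      using lipFb that by auto
    have D1: "\<And>s'. s' \<in> {-t2..s} \<Longrightarrow> (Sb c has_vector_derivative Fb s' (Sb c s')) (at s' within {-t2..s})"
      using Sb[of c] that by (auto intro: has_vector_derivative_within_subset[where S="{-t2..-c}"])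
    have D2: "((\<lambda>s. U (- s)) has_vector_derivative Fb s' (U (- s'))) (at s' within {-t2..s})"
      if s': "s' \<in> {-t2..s}" for s'
    proof -
      have "-s' \<in> J" using Jseg[OF h(5) t12(2)] s' by auto
      then have "((\<lambda>s. U (- s)) has_vector_derivative - F (-s') (U (-s'))) (at s')"
        using Ud[of "-s'"] by (intro hvd_reflect) auto
      then show ?thesis
        by (auto simp: Fb_def intro: has_vector_derivative_at_within)
    qed
    show ?thesis
      using ode_unique[OF L1 L2 D1 D2, of s] Sb[of c] that by auto
  qed
  define yB where "yB t = Sb (t/2) (-t)" for t
  have yBU: "yB t = U t" if "t \<le> t2" "t \<in> J" for t
  proof -
    have "t > 0" using that J(4) by auto
    then show ?thesis unfolding yB_def using SbU[of "t/2" "-t"] that by auto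
  qed
  have yBd: "(yB has_vector_derivative F t (yB t)) (at t)" if "0 < t" "t < t2" for t
  proof -
    have "(Sb (t/2) has_vector_derivative Fb (-t) (Sb (t/2) (-t))) (at (-t) within {-t2..-(t/2)})"
      using Sb[of "t/2"] that by auto
    moreover have "at (-t) within {-t2..-(t/2)} = at (-t)" using that by (intro at_within_Icc_at) auto
    ultimately have "((\<lambda>s. Sb (t/2) (-s)) has_vector_derivative - Fb (-t) (Sb (t/2) (-t))) (at t)"
      by (intro hvd_reflect) auto
    then have "((\<lambda>s. Sb (t/2) (-s)) has_vector_derivative F t (yB t)) (at t)"
      by (simp add: Fb_def yB_def)
    then show ?thesis
    proof (rule has_vector_derivative_transform_within_open[of _ _ _ "{t/2<..<t2}"])
      fix s assume s: "s \<in> {t/2<..<t2}"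
      show "Sb (t/2) (-s) = yB s" unfolding yB_def
        by (rule uniqB) (use s that in auto)
    qed (use that in auto)
  qed
  define Y where "Y t = (if t < t2 then yB t else yF t)" for t
  have YU: "Y r = U r" if "r \<in> J" for r
  proof (cases "r < t2")
    case True then show ?thesis using yBU that by (simp add: Y_def)
  next
    case False then show ?thesis using yFU that t12 by (simp add: Y_def)
  qed
  have Yd: "(Y has_vector_derivative F r (Y r)) (at r)" if "r > 0" for r
  proof (cases "r < t2")
    case True
    have "(yB has_vector_derivative F r (Y r)) (at r)" using yBd[OF that True] True by (simp add: Y_def)
    then show ?thesis
      by (rule has_vector_derivative_transform_within_open[of _ _ _ "{0<..<t2}"])
         (use True that in \<open>auto simp: Y_def\<close>)
  next
    case False
    have eq: "yF s = Y s" if "t1 < s" for s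
    proof (cases "s < t2")
      case True
      then have "s \<in> J" using Jseg[OF t12(1) t12(2)] that by auto
      then show ?thesis using True that yBU yFU by (simp add: Y_def)
    qed (simp add: Y_def)
    have "(yF has_vector_derivative F r (Y r)) (at r)"
      using yFd[of r] False t12 by (simp add: Y_def)
    then show ?thesis
      by (rule has_vector_derivative_transform_within_open[of _ _ _ "{t1<..}"])
         (use False t12 eq in auto)
  qed
  show ?thesis
  proof (intro exI conjI ballI)
    fix r :: real assume r: "r \<in> {0<..}"
    show "((\<lambda>r. fst (Y r)) has_vector_derivative snd (Y r)) (at r)"
      using hvd_fst[OF Yd[of r]] r by (simp add: F_def)
    show "((\<lambda>r. snd (Y r)) has_vector_derivative - ((real n - 1) / r) *\<^sub>R snd (Y r) + G (fst (Y r))) (at r)"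
      using hvd_snd[OF Yd[of r]] r by (simp add: F_def)
  next
    fix r assume "r \<in> J"
    then show "fst (Y r) = u r" using YU by (simp add: U_def)
  qed
qed



lemma Ck_Suc_imp: "Ck (Suc m) f \<Longrightarrow> Ck m f"
proof (induction m arbitrary: f)
  case 0
  then have "f differentiable_on UNIV" by (simp add: differentiable_on_def)
  then show ?case by (simp add: differentiable_imp_continuous_on)
next
  case (Suc m)
  then show ?case by simp
qed

lemma Ck_le: "Ck (m + j) f \<Longrightarrow> Ck m f"
proof (induction j arbitrary: f)
  case (Suc j)
  then show ?case by (metis Ck_Suc_imp add_Suc_right)
qed simp



lemma lin_bound:
  fixes L :: "'a::euclidean_space \<Rightarrow> real"
  assumes "linear L"
  shows "\<bar>L h\<bar> \<le> (\<Sum>i\<in>Basis. \<bar>L i\<bar>) * norm h"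
proof -
  have "L h = L (\<Sum>i\<in>Basis. (h \<bullet> i) *\<^sub>R i)" by (simp add: euclidean_representation)
  also have "\<dots> = (\<Sum>i\<in>Basis. (h \<bullet> i) * L i)"
    using assms by (simp add: linear_sum linear_scale)
  finally have eq: "L h = (\<Sum>i\<in>Basis. (h \<bullet> i) * L i)" .
  have "\<bar>L h\<bar> \<le> (\<Sum>i\<in>Basis. \<bar>(h \<bullet> i) * L i\<bar>)"
    unfolding eq by (rule sum_abs)
  also have "\<dots> = (\<Sum>i\<in>Basis. \<bar>h \<bullet> i\<bar> * \<bar>L i\<bar>)" by (simp add: abs_mult)
  also have "\<dots> \<le> (\<Sum>i\<in>Basis. norm h * \<bar>L i\<bar>)"
    by (intro sum_mono mult_right_mono Basis_le_norm) auto
  finally show ?thesis by (simp add: sum_distrib_left[symmetric] mult.commute)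
qed


lemma C1_lip_cball:
  fixes g :: "'a::euclidean_space \<Rightarrow> real"
  assumes d: "\<forall>x. g differentiable (at x)"
    and c: "\<forall>v. continuous_on UNIV (\<lambda>x. frechet_derivative g (at x) v)"
  shows "\<exists>B\<ge>0. \<forall>x\<in>cball 0 \<rho>. \<forall>y\<in>cball 0 \<rho>. \<bar>g x - g y\<bar> \<le> B * norm (x - y)"
proof (cases "\<rho> \<ge> 0")
  case False
  then have "cball (0::'a) \<rho> = {}" by auto
  then show ?thesis by auto
next
  case True
  define M where "M x = (\<Sum>i\<in>Basis. \<bar>frechet_derivative g (at x) i\<bar>)" for x
  have cM: "continuous_on (cball 0 \<rho>) M" unfolding M_def
    by (intro continuous_intros continuous_on_subset[OF c[rule_format]]) auto
  obtain x0 where x0: "x0 \<in> cball 0 \<rho>" "\<forall>y\<in>cball 0 \<rho>. M y \<le> M x0"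
    using continuous_attains_sup[OF compact_cball _ cM] True by fastforce
  have M0: "M x0 \<ge> 0" unfolding M_def by (simp add: sum_nonneg)
  have "\<bar>g x - g y\<bar> \<le> M x0 * norm (x - y)" if "x \<in> cball 0 \<rho>" "y \<in> cball 0 \<rho>" for x y
  proof -
    have "norm (g x - g y) \<le> M x0 * norm (x - y)"
    proof (rule differentiable_bound[OF convex_cball _ _ that])
      fix z assume z: "z \<in> cball (0::'a) \<rho>"
      show "(g has_derivative frechet_derivative g (at z)) (at z within cball 0 \<rho>)"
        using d frechet_derivative_works has_derivative_at_withinI by blast
      have lin: "linear (frechet_derivative g (at z))"
        using d frechet_derivative_works has_derivative_linear by blast
      have "onorm (frechet_derivative g (at z)) \<le> M z"
        by (rule onorm_le) (use lin_bound[OF lin] in \<open>simp add: M_def\<close>)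
      then show "onorm (frechet_derivative g (at z)) \<le> M x0" using x0 z by force
    qed
    then show ?thesis by simp
  qed
  then show ?thesis using M0 by blast
qed



lemma inner_half_deriv: "((\<lambda>y. inner y y / 2) has_derivative (\<lambda>h. inner x h)) (at (x::'a::euclidean_space))"
proof -
  have "((\<lambda>y. inner y y) has_derivative (\<lambda>h. inner x h + inner h x)) (at x)"
    by (intro has_derivative_inner has_derivative_ident)
  then have "((\<lambda>y. inner y y * (1/2)) has_derivative (\<lambda>h. (inner x h + inner h x) * (1/2))) (at x)"
    by (rule has_derivative_mult_left) 
  then show ?thesis by (simp add: inner_commute)
qed


lemma grad_props:
  fixes V :: "'a::euclidean_space \<Rightarrow> real"
  assumes C2: "Ck 2 V" and R: "R > 0" and Vq: "\<And>u. norm u \<ge> R \<Longrightarrow> V u = (norm u)\<^sup>2 / 2"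
  shows "(\<exists>L\<ge>0. \<forall>x y. norm (grad V x - grad V y) \<le> L * norm (x - y)) \<and> (\<forall>x. norm x \<ge> R \<longrightarrow> grad V x = x)"
proof -
  have dV: "\<forall>x. V differentiable (at x)" and
    dg: "\<And>v. \<forall>x. (\<lambda>x. frechet_derivative V (at x) v) differentiable (at x)" and
    cg: "\<And>v. \<forall>w. continuous_on UNIV (\<lambda>x. frechet_derivative (\<lambda>x. frechet_derivative V (at x) v) (at x) w)"
    using C2 by (auto simp: numeral_2_eq_2)
  define G where "G = grad V"
  define \<rho> where "\<rho> = R + 1"
  have "\<forall>b\<in>Basis. \<exists>B\<ge>0. \<forall>x\<in>cball 0 \<rho>. \<forall>y\<in>cball 0 \<rho>.
      \<bar>frechet_derivative V (at x) b - frechet_derivative V (at y) b\<bar> \<le> B * norm (x - y)"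
    using C1_lip_cball[OF dg cg] by blast
  then obtain B where B: "\<And>b. b \<in> Basis \<Longrightarrow> B b \<ge> 0"
    "\<And>b x y. b \<in> Basis \<Longrightarrow> x\<in>cball 0 \<rho> \<Longrightarrow> y\<in>cball 0 \<rho> \<Longrightarrow>
      \<bar>frechet_derivative V (at x) b - frechet_derivative V (at y) b\<bar> \<le> B b * norm (x - y)"
    by metis
  define LG where "LG = (\<Sum>b\<in>Basis. B b)"
  have LG0: "LG \<ge> 0" unfolding LG_def using B(1) by (simp add: sum_nonneg)
  have lipc: "norm (G x - G y) \<le> LG * norm (x - y)" if "x\<in>cball 0 \<rho>" "y\<in>cball 0 \<rho>" for x y
  proof -
    have "G x - G y = (\<Sum>b\<in>Basis. (frechet_derivative V (at x) b - frechet_derivative V (at y) b) *\<^sub>R b)"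
      by (simp add: G_def grad_def sum_subtractf scaleR_diff_left)
    also have "norm \<dots> \<le> (\<Sum>b\<in>Basis. norm ((frechet_derivative V (at x) b - frechet_derivative V (at y) b) *\<^sub>R b))"
      by (rule norm_sum)
    also have "\<dots> \<le> (\<Sum>b\<in>Basis. B b * norm (x - y))"
      by (intro sum_mono) (use B(2) that in simp)
    finally show ?thesis by (simp add: LG_def sum_distrib_right)
  qed
  have Gout: "G x = x" if "norm x > R" for x
  proof -
    have "((\<lambda>y. inner y y / 2) has_derivative (\<lambda>h. inner x h)) (at x)"
      by (rule inner_half_deriv)
    then have "(V has_derivative (\<lambda>h. inner x h)) (at x)"
    proof (rule has_derivative_transform_within_open[of _ _ _ _ "{y. R < norm y}"])
      show "open {y::'a. R < norm y}" by (simp add: open_Collect_less continuous_on_norm_id)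
      show "x \<in> {y. R < norm y}" using that by simp
      fix y :: 'a assume "y \<in> {y. R < norm y}"
      then show "inner y y / 2 = V y" using Vq[of y] by (simp add: power2_norm_eq_inner)
    qed
    then have "frechet_derivative V (at x) = (\<lambda>h. inner x h)" by (simp add: frechet_derivative_at[symmetric])
    then show ?thesis unfolding G_def grad_def by (simp add: euclidean_representation)
  qed
  obtain e :: 'a where e: "e \<in> Basis" using nonempty_Basis by blast
  define z0 where "z0 = \<rho> *\<^sub>R e"
  have z0n: "norm z0 = \<rho>" using e R by (simp add: z0_def \<rho>_def)
  have Gz0: "G z0 = z0" using Gout z0n by (simp add: \<rho>_def)
  define M where "M = (LG + 1) * (2 * \<rho>)"
  have M: "norm (G x - x) \<le> M" if "x \<in> cball 0 \<rho>" for x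
  proof -
    have z0c: "z0 \<in> cball 0 \<rho>" using z0n by simp
    have "norm (G x - x) \<le> norm (G x - G z0) + norm (z0 - x)"
      using Gz0 norm_triangle_ineq[of "G x - G z0" "z0 - x"] by simp
    also have "\<dots> \<le> LG * norm (x - z0) + norm (x - z0)"
      using lipc[OF that z0c] by (simp add: norm_minus_commute)
    also have "norm (x - z0) \<le> 2 * \<rho>"
      using norm_triangle_ineq4[of x z0] that z0n by simp
    then have "LG * norm (x - z0) + norm (x - z0) \<le> M"
      unfolding M_def using LG0 by (simp add: algebra_simps) (metis add_mono mult_left_mono LG0 mult.commute)
    finally show ?thesis .
  qed
  have M0: "M \<ge> 0" unfolding M_def \<rho>_def using LG0 R by simp
  have glob: "norm (G x - G y) \<le> (LG + M + 1) * norm (x - y)" for x y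
  proof -
    have key: "norm (G x - G y) \<le> (LG + M + 1) * norm (x - y)" if "norm x \<le> norm y" for x y
    proof (cases "norm y \<le> \<rho>")
      case True
      then have "norm (G x - G y) \<le> LG * norm (x - y)" using lipc that by simp
      also have "\<dots> \<le> (LG + M + 1) * norm (x - y)" using M0 by (intro mult_right_mono) auto
      finally show ?thesis .
    next
      case False
      then have yR: "norm y > R" unfolding \<rho>_def by simp
      show ?thesis
      proof (cases "norm x > R")
        case True
        then have "norm (G x - G y) = 1 * norm (x - y)" using Gout yR by simp
        also have "\<dots> \<le> (LG + M + 1) * norm (x - y)" using M0 LG0 by (intro mult_right_mono) auto
        finally show ?thesis .
      next
        case xR: False
        have d1: "norm (x - y) \<ge> 1"
          using norm_triangle_ineq2[of y x] False xR unfolding \<rho>_def by (simp add: norm_minus_commute)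
        have "norm (G x - G y) = norm ((G x - x) + (x - y))" using Gout yR by simp
        also have "\<dots> \<le> M + norm (x - y)"
          using norm_triangle_ineq[of "G x - x" "x - y"] M[of x] xR \<rho>_def by simp
        also have "\<dots> \<le> (LG + M + 1) * norm (x - y)"
          using d1 LG0 M0 by (simp add: algebra_simps) (metis mult_left_mono mult_1_right add_increasing le_add_same_cancel2 order_trans mult_nonneg_nonneg norm_ge_zero)
        finally show ?thesis .
      qed
    qed
    show ?thesis
    proof (cases "norm x \<le> norm y")
      case True then show ?thesis using key by blast
    next
      case False then show ?thesis using key[of y x] by (simp add: norm_minus_commute)
    qed
  qed
  have contG: "continuous_on UNIV G"
    by (rule lipschitz_on_continuous_on[of "LG + M + 1"]) (auto simp: lipschitz_on_def dist_norm glob LG0 M0 add_nonneg_nonneg)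
  have Gge: "G x = x" if "norm x \<ge> R" for x
  proof -
    have cl: "closed {x. G x = id x}" by (rule closed_Collect_eq[OF contG]) (simp add: continuous_on_id)
    define xs where "xs m = (1 + inverse (real (Suc m))) *\<^sub>R x" for m
    have "xs \<longlonglongrightarrow> (1 + 0) *\<^sub>R x" unfolding xs_def
      by (intro tendsto_intros LIMSEQ_inverse_real_of_nat)
    moreover have "\<forall>m. xs m \<in> {x. G x = id x}"
    proof
      fix m
      have "norm (xs m) = (1 + inverse (real (Suc m))) * norm x" unfolding xs_def
        by (simp add: abs_of_pos add_pos_pos)
      also have "\<dots> > norm x"
      proof -
        have np: "norm x > 0" using that R by linarith
        have "inverse (real (Suc m)) * norm x > 0" using np by simp
        moreover have "(1 + inverse (real (Suc m))) * norm x = norm x + inverse (real (Suc m)) * norm x"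
          by (simp add: distrib_right)
        ultimately show ?thesis by linarith
      qed
      finally show "xs m \<in> {x. G x = id x}" using Gout that by auto
    qed
    ultimately show ?thesis using closed_sequentially[OF cl] by fastforce
  qed
  show ?thesis using glob Gge LG0 M0 unfolding G_def
    by (metis add_nonneg_nonneg zero_le_one)
qed




lemma inc_above_lim:
  fixes g g' :: "real \<Rightarrow> real"
  assumes "\<delta> > 0" and der: "\<And>r. 0 < r \<Longrightarrow> r < \<delta> \<Longrightarrow> (g has_real_derivative g' r) (at r)"
    and pos: "\<And>r. 0 < r \<Longrightarrow> r < \<delta> \<Longrightarrow> g' r > 0"
    and lim: "(g \<longlongrightarrow> L) (at_right 0)" and r: "0 < r" "r < \<delta>"
  shows "g r > L"
proof -
  have inc: "g a < g b" if "0 < a" "a < b" "b < \<delta>" for a b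
    by (rule DERIV_pos_imp_increasing[OF that(2)]) (use that der pos in force)
  have "eventually (\<lambda>x. g x \<le> g (r/2)) (at_right 0)"
  proof -
    have "eventually (\<lambda>x. 0 < x \<and> x < r/2) (at_right (0::real))"
      using r by (auto simp: eventually_at_right_field intro!: exI[of _ "r/2"])
    then show ?thesis by eventually_elim (use inc r in \<open>auto intro: less_imp_le\<close>)
  qed
  then have "L \<le> g (r/2)" by (rule tendsto_upperbound[OF lim]) simp
  also have "g (r/2) < g r" using inc[of "r/2" r] r by auto
  finally show ?thesis .
qed

lemma global_max:
  fixes N :: "real \<Rightarrow> real"
  assumes cont: "continuous_on {0<..} N" and l0: "(N \<longlongrightarrow> a) (at_right 0)" and li: "(N \<longlongrightarrow> b) at_top"
    and c: "c > max a b" and r1: "r1 > 0" "N r1 \<ge> c"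
  shows "\<exists>r0>0. \<forall>r>0. N r \<le> N r0"
proof -
  have "eventually (\<lambda>r. N r < c) (at_right 0)" using order_tendstoD(2)[OF l0] c by auto
  then obtain d1 where d1: "d1 > 0" "\<And>r. 0 < r \<Longrightarrow> r < d1 \<Longrightarrow> N r < c"
    by (auto simp: eventually_at_right_field)
  have "eventually (\<lambda>r. N r < c) at_top" using order_tendstoD(2)[OF li] c by auto
  then obtain T where T: "\<And>r. r \<ge> T \<Longrightarrow> N r < c" by (auto simp: eventually_at_top_linorder)
  define a' where "a' = min (d1/2) r1"
  define b' where "b' = max T r1"
  have ab: "0 < a'" "a' \<le> r1" "r1 \<le> b'" using d1 r1 by (auto simp: a'_def b'_def)
  have "continuous_on {a'..b'} N" by (rule continuous_on_subset[OF cont]) (use ab in auto)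
  then obtain r0 where r0: "r0 \<in> {a'..b'}" "\<forall>y\<in>{a'..b'}. N y \<le> N r0"
    using continuous_attains_sup[OF compact_Icc, of a' b' N] ab by fastforce
  have "N r \<le> N r0" if "r > 0" for r
  proof (cases "r \<in> {a'..b'}")
    case True then show ?thesis using r0 by auto
  next
    case False
    then have "N r < c"
    proof (cases "r < a'")
      case True then show ?thesis using d1 that by (intro d1(2)) (auto simp: a'_def)
    next
      case False
      then have "r \<ge> T" using \<open>r \<notin> {a'..b'}\<close> by (auto simp: b'_def)
      then show ?thesis using T by auto
    qed
    also have "c \<le> N r1" using r1 by simp
    also have "N r1 \<le> N r0" using r0 ab by auto
    finally show ?thesis by simp
  qed
  moreover have "r0 > 0" using r0 ab by auto
  ultimately show ?thesis by blast
qed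

lemma part2:
  fixes G :: "'a::euclidean_space \<Rightarrow> 'a" and u u' :: "real \<Rightarrow> 'a"
  assumes contG: "continuous_on UNIV G" and Gid: "\<And>x. norm x \<ge> R \<Longrightarrow> G x = x"
    and R: "R > 0" and n2: "n \<ge> 2"
    and sol: "\<And>r. r > 0 \<Longrightarrow> (u has_vector_derivative u' r) (at r) \<and>
        (u' has_vector_derivative (- ((real n - 1) / r) *\<^sub>R u' r + G (u r))) (at r)"
    and d0: "(u' \<longlongrightarrow> 0) (at_right 0)"
    and inf: "(u \<longlongrightarrow> uinf) at_top" and Guinf: "G uinf = 0"
  shows "bdd_above ((\<lambda>r. norm (u r)) ` {0<..}) \<and> (SUP r\<in>{0<..}. norm (u r)) < R"
proof -
  define N where "N r = norm (u r)" for r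
  have ud: "(u has_vector_derivative u' r) (at r)" if "r > 0" for r using sol[OF that] by auto
  have u'd: "(u' has_vector_derivative (- ((real n - 1) / r) *\<^sub>R u' r + G (u r))) (at r)" if "r > 0" for r
    using sol[OF that] by auto
  have contu: "continuous_on {0<..} u"
    by (rule continuous_on_vector_derivative[of _ _ u']) (use ud in \<open>auto intro: has_vector_derivative_at_within\<close>)
  have contN: "continuous_on {0<..} N" unfolding N_def by (intro continuous_intros contu)
  have linf: "norm uinf < R"
  proof (rule ccontr)
    assume "\<not> norm uinf < R"
    then have "G uinf = uinf" using Gid by auto
    then have "uinf = 0" using Guinf by simp
    then show False using \<open>\<not> norm uinf < R\<close> R by simp
  qed
  have Ninf: "(N \<longlongrightarrow> norm uinf) at_top" unfolding N_def by (intro tendsto_intros inf)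
  obtain l where l: "(u \<longlongrightarrow> l) (at_right 0)"
  proof -
    have "eventually (\<lambda>r. norm (u' r) < 1) (at_right 0)"
      using order_tendstoD(2)[OF tendsto_norm[OF d0]] by simp
    then obtain \<delta> where \<delta>: "\<delta> > 0" "\<And>r. 0 < r \<Longrightarrow> r < \<delta> \<Longrightarrow> norm (u' r) < 1"
      by (auto simp: eventually_at_right_field)
    have lip: "norm (u x - u y) \<le> 1 * norm (x - y)" if "x \<in> {0<..<\<delta>}" "y \<in> {0<..<\<delta>}" for x y
    proof (rule differentiable_bound[OF convex_real_interval(8) _ _ that])
      fix r assume r: "r \<in> {0<..<\<delta>}"
      show "(u has_derivative (\<lambda>h. h *\<^sub>R u' r)) (at r within {0<..<\<delta>})"
        using ud[of r] r unfolding has_vector_derivative_def by (auto intro: has_derivative_at_withinI)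
      show "onorm (\<lambda>h. h *\<^sub>R u' r) \<le> 1"
      proof (rule onorm_le)
        fix h :: real
        show "norm (h *\<^sub>R u' r) \<le> 1 * norm h"
          using \<delta>(2)[of r] r by (simp add: mult_left_le)
      qed
    qed
    have "uniformly_continuous_on {0<..<\<delta>} u"
      by (rule lipschitz_on_uniformly_continuous[of 1]) (use lip in \<open>auto simp: lipschitz_on_def dist_norm\<close>)
    moreover have "0 \<in> closure {0<..<\<delta>}" using \<delta> by simp
    ultimately obtain l where "(u \<longlongrightarrow> l) (at 0 within {0<..<\<delta>})"
      by (rule uniformly_continuous_on_extension_at_closure)
    moreover have "eventually (\<lambda>x. x \<in> {0<..<\<delta>} \<longleftrightarrow> x \<in> {0<..}) (at (0::real))"
      using \<delta> by (auto simp: eventually_at dist_norm intro!: exI[of _ \<delta>])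
    ultimately have "(u \<longlongrightarrow> l) (at 0 within {0<..})" by (rule Lim_transform_within_set)
    then show ?thesis using that by blast
  qed
  have N0: "(N \<longlongrightarrow> norm l) (at_right 0)" unfolding N_def by (intro tendsto_intros l)
  have noMax: False if r0: "r0 > 0" "N r0 \<ge> R" "\<And>r. r > 0 \<Longrightarrow> N r \<le> N r0" for r0
  proof -
    define f where "f r = inner (u r) (u r)" for r
    define \<phi> where "\<phi> r = 2 * inner (u r) (u' r)" for r
    have fd: "(f has_real_derivative \<phi> r) (at r)" if "r > 0" for r
      unfolding f_def \<phi>_def by (rule inner_self_deriv[OF ud[OF that]])
    have fle: "f r \<le> f r0" if "r > 0" for r
    proof -
      have "N r * N r \<le> N r0 * N r0" using r0(3)[OF that] by (intro mult_mono) (auto simp: N_def)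
      then show ?thesis by (simp add: f_def N_def power2_norm_eq_inner[symmetric] power2_eq_square)
    qed
    have phi0: "\<phi> r0 = 0"
      by (rule DERIV_local_max[OF fd[OF r0(1)] r0(1)]) (use fle in auto)
    have "(\<phi> has_real_derivative 2 * (inner (u' r0) (u' r0) + inner (u r0) (- ((real n - 1) / r0) *\<^sub>R u' r0 + G (u r0)))) (at r0)"
    proof -
      have "((\<lambda>r. inner (u r) (u' r)) has_derivative
          (\<lambda>h. inner (u r0) (h *\<^sub>R (- ((real n - 1) / r0) *\<^sub>R u' r0 + G (u r0))) + inner (h *\<^sub>R u' r0) (u' r0))) (at r0)"
        using ud[OF r0(1)] u'd[OF r0(1)] unfolding has_vector_derivative_def
        by (intro derivative_eq_intros) auto
      then have "((\<lambda>r. inner (u r) (u' r)) has_real_derivative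
          (inner (u' r0) (u' r0) + inner (u r0) (- ((real n - 1) / r0) *\<^sub>R u' r0 + G (u r0)))) (at r0)"
        unfolding has_field_derivative_def
        by (rule has_derivative_eq_rhs) (auto simp: fun_eq_iff algebra_simps inner_commute)
      then show ?thesis unfolding \<phi>_def by (intro derivative_eq_intros) auto
    qed
    moreover have "2 * (inner (u' r0) (u' r0) + inner (u r0) (- ((real n - 1) / r0) *\<^sub>R u' r0 + G (u r0))) > 0"
    proof -
      have "G (u r0) = u r0" using Gid r0(2) by (simp add: N_def)
      moreover have "inner (u r0) (u' r0) = 0" using phi0 by (simp add: \<phi>_def)
      moreover have "inner (u r0) (u r0) > 0" using r0(2) R by (auto simp: N_def)
      moreover have "inner (u' r0) (u' r0) \<ge> 0" by simp
      ultimately show ?thesis by (simp add: inner_add_right inner_diff_right add_nonneg_pos)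
    qed
    ultimately obtain d where d: "d > 0" "\<And>h. h > 0 \<Longrightarrow> h < d \<Longrightarrow> \<phi> r0 < \<phi> (r0 + h)"
      using DERIV_pos_inc_right by blast
    have "f r0 < f (r0 + d/2)"
    proof (rule DERIV_pos_imp_increasing_open[of r0 "r0 + d/2" f])
      show "r0 < r0 + d/2" using d by simp
      fix x assume x: "r0 < x" "x < r0 + d/2"
      have "\<phi> x > 0" using d(2)[of "x - r0"] x phi0 by auto
      then show "\<exists>y. (f has_real_derivative y) (at x) \<and> 0 < y" using fd[of x] x r0 by auto
    next
      have "continuous_on {r0..r0 + d/2} u" by (rule continuous_on_subset[OF contu]) (use r0 in auto)
      then show "continuous_on {r0..r0 + d/2} f" unfolding f_def by (intro continuous_intros)
    qed
    moreover have "f (r0 + d/2) \<le> f r0" using fle[of "r0 + d/2"] r0 d by auto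
    ultimately show False by simp
  qed
  have step1: "\<exists>r>0. N r > norm l" if lR: "norm l \<ge> R"
  proof -
    have Gl: "G l = l" using Gid lR by auto
    have "((\<lambda>r. G (u r)) \<longlongrightarrow> G l) (at_right 0)"
      using contG l by (auto intro: continuous_on_tendsto_compose[of UNIV G])
    then have "((\<lambda>r. inner (u r) (G (u r))) \<longlongrightarrow> inner l l) (at_right 0)"
      using l Gl by (auto intro: tendsto_inner)
    moreover have "inner l l > 0" using lR R by auto
    ultimately have "eventually (\<lambda>r. inner (u r) (G (u r)) > 0) (at_right 0)"
      using order_tendstoD(1) by blast
    then obtain \<delta> where \<delta>: "\<delta> > 0" "\<And>r. 0 < r \<Longrightarrow> r < \<delta> \<Longrightarrow> inner (u r) (G (u r)) > 0"
      by (auto simp: eventually_at_right_field)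
    define h where "h r = r ^ (n - 1) * inner (u r) (u' r)" for r
    define h' where "h' r = r ^ (n - 1) * (inner (u' r) (u' r) + inner (u r) (G (u r)))" for r
    have hd: "(h has_real_derivative h' r) (at r)" if "r > 0" for r
    proof -
      have "((\<lambda>r. inner (u r) (u' r)) has_derivative
          (\<lambda>k. inner (u r) (k *\<^sub>R (- ((real n - 1) / r) *\<^sub>R u' r + G (u r))) + inner (k *\<^sub>R u' r) (u' r))) (at r)"
        using ud[OF that] u'd[OF that] unfolding has_vector_derivative_def
        by (intro derivative_eq_intros) auto
      then have ip: "((\<lambda>r. inner (u r) (u' r)) has_real_derivative
          (inner (u' r) (u' r) + inner (u r) (- ((real n - 1) / r) *\<^sub>R u' r + G (u r)))) (at r)"
        unfolding has_field_derivative_def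
        by (rule has_derivative_eq_rhs) (auto simp: fun_eq_iff algebra_simps inner_commute)
      have m: "n - 1 - 1 = n - 2" by simp
      have "(h has_real_derivative real (n - 1) * r ^ (n - 1 - 1) * inner (u r) (u' r)
           + (inner (u' r) (u' r) + inner (u r) (- ((real n - 1) / r) *\<^sub>R u' r + G (u r))) * r ^ (n - 1)) (at r)"
      proof -
        have "((\<lambda>r. r ^ (n - 1)) has_real_derivative real (n - 1) * r ^ (n - 1 - 1)) (at r)"
          using DERIV_pow[of "n - 1" r UNIV] by simp
        from DERIV_mult[OF this ip] show ?thesis unfolding h_def .
      qed
      moreover have "real (n - 1) * r ^ (n - 1 - 1) * inner (u r) (u' r)
           + (inner (u' r) (u' r) + inner (u r) (- ((real n - 1) / r) *\<^sub>R u' r + G (u r))) * r ^ (n - 1) = h' r"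
      proof -
        have m1: "n - 1 = Suc (n - 2)" using n2 by simp
        have pw: "r ^ (n - 1) = r ^ (n - 2) * r" unfolding m1 by (simp add: power_Suc2)
        have rn: "real (n - 1) = real n - 1" using n2 by simp
        have ex: "inner (u r) (- ((real n - 1) / r) *\<^sub>R u' r + G (u r)) = - ((real n - 1) / r) * inner (u r) (u' r) + inner (u r) (G (u r))"
          by (simp add: inner_add_right inner_diff_right)
        have aux: "c * Q * a + (b + (- (c / r) * a + e)) * P = P * (b + e)" if "r > 0" "P = Q * r" for c Q a b e P :: real
          using that by (simp add: field_simps)
        show ?thesis unfolding h'_def ex rn m
          by (rule aux[OF that pw])
      qed
      ultimately show ?thesis by simp
    qed
    have hpos: "h' r > 0" if "0 < r" "r < \<delta>" for r
      unfolding h'_def using \<delta>(2)[OF that] that by (intro mult_pos_pos add_nonneg_pos) auto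
    have h0: "(h \<longlongrightarrow> 0) (at_right 0)"
    proof -
      have "((\<lambda>r. r ^ (n - 1) * inner (u r) (u' r)) \<longlongrightarrow> 0 ^ (n - 1) * inner l 0) (at_right 0)"
        by (intro tendsto_intros l d0)
      then show ?thesis unfolding h_def by simp
    qed
    have hp: "h r > 0" if "0 < r" "r < \<delta>" for r
      by (rule inc_above_lim[OF \<delta>(1) hd hpos h0 that]) auto
    define f where "f r = inner (u r) (u r)" for r
    have fd: "(f has_real_derivative 2 * inner (u r) (u' r)) (at r)" if "r > 0" for r
      unfolding f_def by (rule inner_self_deriv[OF ud[OF that]])
    have fpos: "2 * inner (u r) (u' r) > 0" if "0 < r" "r < \<delta>" for r
    proof -
      have "r ^ (n - 1) * inner (u r) (u' r) > 0" using hp[OF that] by (simp add: h_def)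
      moreover have "r ^ (n - 1) > 0" using that by simp
      ultimately have "inner (u r) (u' r) > 0" using zero_less_mult_pos by blast
      then show ?thesis by simp
    qed
    have f0: "(f \<longlongrightarrow> inner l l) (at_right 0)" unfolding f_def by (intro tendsto_intros l)
    have "f (\<delta>/2) > inner l l"
      by (rule inc_above_lim[OF \<delta>(1) fd fpos f0]) (use \<delta> in auto)
    then have "N (\<delta>/2) ^ 2 > norm l ^ 2" by (simp add: f_def N_def power2_norm_eq_inner)
    then have "N (\<delta>/2) > norm l" by (rule power_less_imp_less_base) (simp add: N_def)
    then show ?thesis using \<delta> by (intro exI[of _ "\<delta>/2"]) auto
  qed
  have bdd: "bdd_above (N ` {0<..})"
  proof (cases "\<exists>r>0. N r \<ge> max (norm l) (norm uinf) + 1")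
    case True
    then obtain r1 where "r1 > 0" "N r1 \<ge> max (norm l) (norm uinf) + 1" by auto
    from global_max[OF contN N0 Ninf _ this(1) this(2)] obtain r0 where "\<forall>r>0. N r \<le> N r0" by auto
    then show ?thesis by (intro bdd_aboveI2[of _ _ "N r0"]) auto
  next
    case False
    then have "\<forall>r>0. N r \<le> max (norm l) (norm uinf) + 1" by (auto simp: not_le less_imp_le)
    then show ?thesis by (intro bdd_aboveI2[of _ _ "max (norm l) (norm uinf) + 1"]) auto
  qed
  have sup: "(SUP r\<in>{0<..}. N r) < R"
  proof (rule ccontr)
    assume "\<not> (SUP r\<in>{0<..}. N r) < R"
    then have SR: "(SUP r\<in>{0<..}. N r) \<ge> R" by simp
    have "\<exists>r1>0. N r1 > max (norm l) (norm uinf) \<and> (norm l \<ge> R \<longrightarrow> N r1 \<ge> R)"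
    proof (cases "norm l \<ge> R")
      case True
      then obtain r1 where r1: "r1 > 0" "N r1 > norm l" using step1 by blast
      have "N r1 > max (norm l) (norm uinf)" using r1 True linf by simp
      moreover have "N r1 \<ge> R" using r1 True by simp
      ultimately show ?thesis using r1 by blast
    next
      case False
      have "(max (norm l) (norm uinf) + R) / 2 < (SUP r\<in>{0<..}. N r)" using SR False linf by simp
      then have "\<exists>x\<in>{0<..}. (max (norm l) (norm uinf) + R) / 2 < N x"
        by (subst less_cSUP_iff[OF _ bdd, symmetric]) auto
      then obtain r1 where r1: "r1 > 0" "(max (norm l) (norm uinf) + R) / 2 < N r1" by auto
      have "max (norm l) (norm uinf) < R" using False linf by simp
      moreover have "max (norm l) (norm uinf) + R < 2 * N r1" using r1(2) by simp
      ultimately have "N r1 > max (norm l) (norm uinf)" by linarith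
      then show ?thesis using r1 False by blast
    qed
    then obtain r1 where r1: "r1 > 0" "N r1 > max (norm l) (norm uinf)" and r1R: "norm l \<ge> R \<Longrightarrow> N r1 \<ge> R"
      by blast
    from global_max[OF contN N0 Ninf r1(2) r1(1) order_refl] obtain r0 where
      r0: "r0 > 0" "\<forall>r>0. N r \<le> N r0" by blast
    have "N r0 \<ge> R"
    proof (cases "norm l \<ge> R")
      case True
      have "N r1 \<le> N r0" using r0 r1 by blast
      then show ?thesis using r1R[OF True] by linarith
    next
      case False
      have "(SUP r\<in>{0<..}. N r) \<le> N r0" using r0 by (intro cSUP_least) auto
      then show ?thesis using SR by simp
    qed
    then show False using noMax r0 by blast
  qed
  show ?thesis using bdd sup by (simp add: N_def)
qed


theorem lemma3p1:
  fixes V :: "'a::euclidean_space \<Rightarrow> real" and n k :: nat and R :: real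
  assumes "n \<ge> 2" and "k \<ge> 1" and "R > 0"
    and "Ck (k + 1) V"
    and "\<And>u. norm u \<ge> R \<Longrightarrow> V u = (norm u)\<^sup>2 / 2"
  shows "(\<forall>J u. is_interval J \<and> open J \<and> J \<noteq> {} \<and> J \<subseteq> {0<..} \<and> solves_on n V u J
            \<longrightarrow> (\<exists>w. solves_on n V w {0<..} \<and> (\<forall>r\<in>J. w r = u r)))
       \<and> (\<forall>u\<in>S_V n V. bdd_above ((\<lambda>r. norm (u r)) ` {0<..})
                          \<and> (SUP r\<in>{0<..}. norm (u r)) < R)"
proof -
  have kk: "k + 1 = 2 + (k - 1)" using assms(2) by simp
  have "Ck (2 + (k - 1)) V" using assms(4) unfolding kk .
  then have C2: "Ck 2 V" by (rule Ck_le)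
  from grad_props[OF C2 assms(3) assms(5)] obtain L where
    L: "L \<ge> 0" "\<And>x y. norm (grad V x - grad V y) \<le> L * norm (x - y)"
    and Gid: "\<And>x. norm x \<ge> R \<Longrightarrow> grad V x = x" by blast
  have contG: "continuous_on UNIV (grad V)"
    by (rule lipschitz_on_continuous_on[of L]) (auto simp: lipschitz_on_def L dist_norm)
  have n1: "n \<ge> 1" using assms(1) by simp
  have P1: "\<exists>w. solves_on n V w {0<..} \<and> (\<forall>r\<in>J. w r = u r)"
    if H: "is_interval J" "open J" "J \<noteq> {}" "J \<subseteq> {0<..}" "solves_on n V u J" for J u
  proof -
    from H(5) obtain u' where u': "\<And>r. r\<in>J \<Longrightarrow> (u has_vector_derivative u' r) (at r) \<and>
        (u' has_vector_derivative (- ((real n - 1) / r) *\<^sub>R u' r + grad V (u r))) (at r)"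
      unfolding solves_on_def by blast
    from part1[OF L(2) L(1) n1 H(1-4) u'] obtain w w' where
      w: "\<forall>r\<in>{0<..}. (w has_vector_derivative w' r) (at r) \<and>
              (w' has_vector_derivative (- ((real n - 1) / r) *\<^sub>R w' r + grad V (w r))) (at r)"
      "\<forall>r\<in>J. w r = u r" by blast
    have "solves_on n V w {0<..}" unfolding solves_on_def using w(1) by (intro exI[of _ w'])
    then show ?thesis using w(2) by (intro exI[of _ w] conjI)
  qed
  have P2: "bdd_above ((\<lambda>r. norm (u r)) ` {0<..}) \<and> (SUP r\<in>{0<..}. norm (u r)) < R"
    if u: "u \<in> S_V n V" for u
  proof -
    have su: "solves_on n V u {0<..}" and d0: "((\<lambda>r. vector_derivative u (at r)) \<longlongrightarrow> 0) (at_right 0)"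
      and ex: "\<exists>uinf. (u \<longlongrightarrow> uinf) at_top \<and> grad V uinf = 0 \<and> pos_def_hess V uinf"
      using u unfolding S_V_def by auto
    from su obtain u' where sol: "\<And>r. r\<in>{0<..} \<Longrightarrow> (u has_vector_derivative u' r) (at r) \<and>
        (u' has_vector_derivative (- ((real n - 1) / r) *\<^sub>R u' r + grad V (u r))) (at r)"
      unfolding solves_on_def by blast
    from ex obtain uinf where inf: "(u \<longlongrightarrow> uinf) at_top" and Gu: "grad V uinf = 0" by blast
    have "eventually (\<lambda>r. vector_derivative u (at r) = u' r) (at_right (0::real))"
      using eventually_at_right_less[of 0]
    proof eventually_elim
      case (elim r)
      then show ?case using sol[of r] by (auto intro: vector_derivative_at)
    qed
    then have d0': "(u' \<longlongrightarrow> 0) (at_right 0)" by (rule Lim_transform_eventually[OF d0])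
    have sol': "\<And>r. r > 0 \<Longrightarrow> (u has_vector_derivative u' r) (at r) \<and>
        (u' has_vector_derivative (- ((real n - 1) / r) *\<^sub>R u' r + grad V (u r))) (at r)"
      using sol by simp
    show ?thesis
      by (rule part2[OF contG Gid assms(3) assms(1) sol' d0' inf Gu])
  qed
  show ?thesis
  proof (intro conjI allI impI ballI)
    fix J u
    assume "is_interval J \<and> open J \<and> J \<noteq> {} \<and> J \<subseteq> {0<..} \<and> solves_on n V u J"
    then show "\<exists>w. solves_on n V w {0<..} \<and> (\<forall>r\<in>J. w r = u r)"
      by (elim conjE) (rule P1)
  next
    fix u assume "u \<in> S_V n V"
    from P2[OF this] show "bdd_above ((\<lambda>r. norm (u r)) ` {0<..})" by (rule conjunct1)
  next
    fix u assume "u \<in> S_V n V"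
    from P2[OF this] show "(SUP r\<in>{0<..}. norm (u r)) < R" by (rule conjunct2)
  qed
qed

end
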